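(* Let $r,q$ be positive integers, $k\ge1$, $p_1,\dots,p_k\ge1$ integers, and $s_i,a_{ij},\nu$ integers ($1\le i\le k$, $1\le j\le p_i$) with all $a_{ij}>0$. Suppose $B(n)=\lceil rn/q\rceil$ formally satisfies the recursion $R(n)=\sum_{i=1}^k R\big(n-s_i-\sum_{j=1}^{p_i}R(n-a_{ij})\big)+\nu$, and suppose $rp_i/q\le 1$ for all $i$. Then there exist a recursion $R'$ of the same form whose parameter vector is equivalent to that of $R$, and a positive integer $m$, such that $\lceil rn/q\rceil$ is the unique solution generated by $R'$ with initial conditions $R'(t)=\lceil tr/q\rceil$ for $1\le t\le m$. If moreover $rp_i/q<1$ for all $i$, then the same holds for $R$ itself (with some positive integer $m$).
   Context: A sequence $B:\mathbb{Z}\to\mathbb{Z}$ formally satisfies $R$ if for every integer $n$, $B(n)=\sum_{i=1}^k B\big(n-s_i-\sum_{j=1}^{p_i}B(n-a_{ij})\big)+\nu$. The parameter vector of $R$ is $\langle s_1;a_{11},\dots,a_{1p_1}:\cdots:s_k;a_{k1},\dots,a_{kp_k}|\nu\rangle$; equivalence of parameter vectors (with the same $k,p_i$) is the equivalence relation generated by the moves (i) replace $s_i$ by $s_i+dr$ and one $a_{ij}$ by $a_{ij}+dq$ ($d\in\mathbb{Z}$), and (ii) replace $s_i$ by $s_i+cq$ and $\nu$ by $\nu+cr$ ($c\in\mathbb{Z}$). "$B$ is the unique solution generated by $R'$ with initial conditions $R'(t)=B(t)$, $1\le t\le m$" means: for every $n>m$, when $R'(1),\dots,R'(n-1)$ are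 given, every argument at which $R'$ must be evaluated in the right-hand side for $R'(n)$ lies in $\{1,\dots,n-1\}$, so the values $R'(n)$ are uniquely determined recursively, and the resulting sequence is $R'(n)=B(n)$ for all $n\ge1$. *)

theory Defs
  imports Complex_Main
begin

definition rhs :: "nat \<Rightarrow> (nat \<Rightarrow> nat) \<Rightarrow> (nat \<Rightarrow> int) \<Rightarrow> (nat \<Rightarrow> nat \<Rightarrow> int) \<Rightarrow> int
                  \<Rightarrow> (int \<Rightarrow> int) \<Rightarrow> int \<Rightarrow> int" where
  "rhs k p s a nu B n =
     (\<Sum>i=1..k. B (n - s i - (\<Sum>j=1..p i. B (n - a i j)))) + nu"

definition formally_satisfies ::
  "nat \<Rightarrow> (nat \<Rightarrow> nat) \<Rightarrow> (nat \<Rightarrow> int) \<Rightarrow> (nat \<Rightarrow> nat \<Rightarrow> int) \<Rightarrow> int \<Rightarrow> (int \<Rightarrow> int) \<Rightarrow> bool" where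
  "formally_satisfies k p s a nu B \<longleftrightarrow> (\<forall>n::int. B n = rhs k p s a nu B n)"

definition param_move ::
  "int \<Rightarrow> int \<Rightarrow> nat \<Rightarrow> (nat \<Rightarrow> nat)
   \<Rightarrow> (nat \<Rightarrow> int) \<times> (nat \<Rightarrow> nat \<Rightarrow> int) \<times> int
   \<Rightarrow> (nat \<Rightarrow> int) \<times> (nat \<Rightarrow> nat \<Rightarrow> int) \<times> int \<Rightarrow> bool" where
  "param_move r q k p x y \<longleftrightarrow>
     (case x of (s, a, nu) \<Rightarrow>
       (\<exists>i\<in>{1..k}. \<exists>j\<in>{1..p i}. \<exists>d::int.
          y = (s(i := s i + d * r), a(i := (a i)(j := a i j + d * q)), nu))
     \<or> (\<exists>i\<in>{1..k}. \<exists>c::int.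
          y = (s(i := s i + c * q), a, nu + c * r)))"

definition param_equiv ::
  "int \<Rightarrow> int \<Rightarrow> nat \<Rightarrow> (nat \<Rightarrow> nat)
   \<Rightarrow> (nat \<Rightarrow> int) \<times> (nat \<Rightarrow> nat \<Rightarrow> int) \<times> int
   \<Rightarrow> (nat \<Rightarrow> int) \<times> (nat \<Rightarrow> nat \<Rightarrow> int) \<times> int \<Rightarrow> bool" where
  "param_equiv r q k p = equivclp (param_move r q k p)"

text \<open>B is the unique solution generated by the recursion with initial conditions
  B(1),...,B(m): for every n > m, when the values at 1..n-1 are those of B, every
  argument needed in the right-hand side for n lies in {1..n-1}, and the
  right-hand side equals B(n). (By induction on n this says exactly that the
  recursively determined sequence is well defined and coincides with B on n >= 1.)\<close>
definition generates ::
  "nat \<Rightarrow> (nat \<Rightarrow> nat) \<Rightarrow> (nat \<Rightarrow> int) \<Rightarrow> (nat \<Rightarrow> nat \<Rightarrow> int) \<Rightarrow> int \<Rightarrow> (int \<Rightarrow> int) \<Rightarrow> int \<Rightarrow> bool" where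
  "generates k p s a nu B m \<longleftrightarrow>
     (\<forall>n::int. n > m \<longrightarrow>
        (\<forall>i\<in>{1..k}. (\<forall>j\<in>{1..p i}. 1 \<le> n - a i j \<and> n - a i j \<le> n - 1)
           \<and> 1 \<le> n - s i - (\<Sum>j=1..p i. B (n - a i j))
           \<and> n - s i - (\<Sum>j=1..p i. B (n - a i j)) \<le> n - 1)
        \<and> B n = rhs k p s a nu B n)"

end

theory Submission imports Defs begin

abbreviation F :: "int \<Rightarrow> int \<Rightarrow> int \<Rightarrow> int" where
 "F r q \<equiv> (\<lambda>n. \<lceil>real_of_int (r * n) / real_of_int q\<rceil>)"

lemma F_lo: assumes "q > 0" shows "r * x \<le> q * F r q x"
proof -
  have "real_of_int (r*x) / real_of_int q \<le> real_of_int (F r q x)" by (rule le_of_int_ceiling)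
  hence "(real_of_int (r*x) / real_of_int q) * real_of_int q \<le> real_of_int (F r q x) * real_of_int q"
    using assms by (intro mult_right_mono) auto
  hence "real_of_int (r*x) \<le> real_of_int (F r q x) * real_of_int q"
    using assms by (simp del: of_int_mult)
  thus ?thesis by (metis of_int_le_iff of_int_mult mult.commute)
qed

lemma F_hi: assumes "q > 0" shows "q * F r q x \<le> r * x + q - 1"
proof -
  have "real_of_int (F r q x) < real_of_int (r*x) / real_of_int q + 1" using ceiling_correct[of "real_of_int (r*x) / real_of_int q"] by linarith
  hence "real_of_int q * real_of_int (F r q x) < real_of_int (r*x) + real_of_int q"
    using assms by (simp add: field_simps)
  hence "q * F r q x < r*x + q" by (metis of_int_add of_int_less_iff of_int_mult)
  thus ?thesis by simp
qed

lemma F_shift: assumes "q > 0" shows "F r q (x + C*q) = F r q x + C*r"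
proof -
  have "real_of_int (r*(x+C*q)) / real_of_int q = real_of_int (r*x)/real_of_int q + real_of_int (C*r)"
    using assms by (simp add: field_simps)
  thus ?thesis by (simp only:) (rule ceiling_add_of_int)
qed

lemma fin_ev: "finite I \<Longrightarrow> \<forall>i\<in>I. \<exists>M::int. \<forall>n>M. P i n \<Longrightarrow> \<exists>M. \<forall>i\<in>I. \<forall>n>M. P i n"
proof (induction I rule: finite_induct)
  case empty thus ?case by auto
next
  case (insert x F)
  then obtain M1 where "\<forall>i\<in>F. \<forall>n>M1. P i n" by auto
  moreover obtain M2 where "\<forall>n>M2. P x n" using insert by auto
  ultimately show ?case by (intro exI[of _ "max M1 M2"]) auto
qed

lemma S_hi:
  assumes "r > 0" "q > 0" "\<forall>j\<in>{1..pp}. aa j > 0"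
  shows "q * (\<Sum>j=1..pp. F r q (n - aa j)) \<le> int pp * (r*n + q)"
proof -
  have "q * (\<Sum>j=1..pp. F r q (n - aa j)) = (\<Sum>j=1..pp. q * F r q (n - aa j))"
    by (simp add: sum_distrib_left)
  also have "\<dots> \<le> (\<Sum>j=1..pp. r*n + q)"
  proof (rule sum_mono)
    fix j assume j: "j \<in> {1..pp}"
    have h1: "q * F r q (n - aa j) \<le> r*(n - aa j) + q - 1" using F_hi assms by blast
    have "aa j > 0" using assms(3) j by blast
    hence h2: "r * aa j \<ge> 0" using assms(1) by simp
    have h3: "r*(n - aa j) = r*n - r*aa j" by (simp add: right_diff_distrib)
    show "q * F r q (n - aa j) \<le> r*n + q" using h1 h2 h3 by linarith
  qed
  also have "\<dots> = int pp * (r*n+q)" by simp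
  finally show ?thesis .
qed

lemma S_lo:
  assumes "r > 0" "q > 0"
  shows "q * (\<Sum>j=1..pp. F r q (n - aa j)) \<ge> int pp * (r*n) - r * (\<Sum>j=1..pp. aa j)"
proof -
  have "int pp * (r*n) - r * (\<Sum>j=1..pp. aa j) = (\<Sum>j=1..pp. r * (n - aa j))"
    by (simp add: sum_distrib_left sum_subtractf algebra_simps)
  also have "\<dots> \<le> (\<Sum>j=1..pp. q * F r q (n - aa j))"
    by (rule sum_mono) (use F_lo assms in blast)
  also have "\<dots> = q * (\<Sum>j=1..pp. F r q (n - aa j))"
    by (simp add: sum_distrib_left)
  finally show ?thesis .
qed

lemma cancel_aux: "(X::int) + kk*(C*r) + (nu - kk*C*r) = X + nu"
  by (simp add: mult.assoc)

lemma G: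
  assumes r: "r > 0" and q: "q > 0" and p: "\<forall>i\<in>{1..k}. p i \<ge> 1"
    and a: "\<forall>i\<in>{1..k}. \<forall>j\<in>{1..p i}. a i j > 0"
    and fs: "formally_satisfies k p s a nu (F r q)"
    and lb: "\<forall>i\<in>{1..k}. \<exists>M. \<forall>n>M. 1 \<le> n - s i - (\<Sum>j=1..p i. F r q (n - a i j))"
  shows "\<exists>m>0. generates k p s a nu (F r q) m"
proof -
  have "\<forall>i\<in>{1..k}. \<exists>M. \<forall>n>M. (\<forall>j\<in>{1..p i}. 1 \<le> n - a i j \<and> n - a i j \<le> n - 1)
           \<and> 1 \<le> n - s i - (\<Sum>j=1..p i. F r q (n - a i j))
           \<and> n - s i - (\<Sum>j=1..p i. F r q (n - a i j)) \<le> n - 1"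
  proof
    fix i assume i: "i \<in> {1..k}"
    obtain M0 where M0: "\<forall>n>M0. 1 \<le> n - s i - (\<Sum>j=1..p i. F r q (n - a i j))"
      using lb i by blast
    define A where "A = (\<Sum>j=1..p i. a i j)"
    have apos: "\<And>j. j \<in> {1..p i} \<Longrightarrow> a i j > 0" using a i by blast
    have anonneg: "\<And>x. x \<in> {1..p i} \<Longrightarrow> 0 \<le> a i x" using apos less_imp_le by blast
    have A0: "A \<ge> 0" unfolding A_def by (intro sum_nonneg) (meson apos less_imp_le)
    have aA: "a i j \<le> A" if "j \<in> {1..p i}" for j
      unfolding A_def by (rule member_le_sum[OF that]) (blast intro: anonneg, simp)
    have rA: "r*A \<ge> 0" using r A0 by simp
    have qs: "q*(1+\<bar>s i\<bar>) \<ge> 0" using q by simp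
    show "\<exists>M. \<forall>n>M. (\<forall>j\<in>{1..p i}. 1 \<le> n - a i j \<and> n - a i j \<le> n - 1)
           \<and> 1 \<le> n - s i - (\<Sum>j=1..p i. F r q (n - a i j))
           \<and> n - s i - (\<Sum>j=1..p i. F r q (n - a i j)) \<le> n - 1"
    proof (intro exI[of _ "max M0 (r*A + q*(1+\<bar>s i\<bar>) + A)"] allI impI conjI ballI)
      fix n assume n: "max M0 (r*A + q*(1+\<bar>s i\<bar>) + A) < n"
      hence n1: "M0 < n" and n2: "r*A + q*(1+\<bar>s i\<bar>) + A < n" by auto
      show "1 \<le> n - s i - (\<Sum>j=1..p i. F r q (n - a i j))" using M0 n1 by blast
      fix j assume j: "j \<in> {1..p i}"
      show "1 \<le> n - a i j" using aA[OF j] n2 rA qs by linarith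
      show "n - a i j \<le> n - 1" using apos[OF j] by linarith
    next
      fix n assume n: "max M0 (r*A + q*(1+\<bar>s i\<bar>) + A) < n"
      hence n2: "r*A + q*(1+\<bar>s i\<bar>) + A < n" by auto
      define S where "S = (\<Sum>j=1..p i. F r q (n - a i j))"
      have n0: "n \<ge> 0" using n2 rA A0 qs by linarith
      have lo: "q*S \<ge> int (p i) * (r*n) - r*A" unfolding S_def A_def by (rule S_lo[OF r q])
      have "1*n \<le> r*n" using r n0 by (intro mult_right_mono) auto
      moreover have "1*(r*n) \<le> int (p i) * (r*n)" using p i r n0
        by (intro mult_right_mono) auto
      ultimately have "q*S > q*(1+\<bar>s i\<bar>)" using lo n2 A0 by linarith
      hence "S > 1+\<bar>s i\<bar>" using q by (simp add: mult_less_cancel_left)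
      thus "n - s i - (\<Sum>j=1..p i. F r q (n - a i j)) \<le> n - 1" unfolding S_def by linarith
    qed
  qed
  from fin_ev[OF finite_atLeastAtMost this] obtain M where M: "\<forall>i\<in>{1..k}. \<forall>n>M. (\<forall>j\<in>{1..p i}. 1 \<le> n - a i j \<and> n - a i j \<le> n - 1)
           \<and> 1 \<le> n - s i - (\<Sum>j=1..p i. F r q (n - a i j))
           \<and> n - s i - (\<Sum>j=1..p i. F r q (n - a i j)) \<le> n - 1"
    by blast
  show ?thesis
  proof (intro exI[of _ "max 1 M"] conjI)
    show "generates k p s a nu (F r q) (max 1 M)"
      unfolding generates_def
      apply (intro allI impI conjI)
      subgoal for n
      proof -
        assume "max 1 M < n"
        hence n: "M < n" by simp
        show ?thesis using M n by blast
      qed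
      subgoal for n using fs unfolding formally_satisfies_def by blast
      done
  qed simp
qed

lemma int_le: assumes "q > 0" "real_of_int r * real pp / real_of_int q \<le> 1"
  shows "r * int pp \<le> q"
proof -
  have "real_of_int r * real pp \<le> real_of_int q" using assms by (simp add: divide_le_eq)
  thus ?thesis by (metis of_int_le_iff of_int_mult of_int_of_nat_eq)
qed

lemma int_lt: assumes "q > 0" "real_of_int r * real pp / real_of_int q < 1"
  shows "r * int pp \<le> q - 1"
proof -
  have "real_of_int r * real pp < real_of_int q" using assms by (simp add: divide_less_eq)
  hence "r * int pp < q" by (metis of_int_less_iff of_int_mult of_int_of_nat_eq)
  thus ?thesis by simp
qed

theorem theorem4:
  fixes r q nu :: int and k :: nat and p :: "nat \<Rightarrow> nat"
    and s :: "nat \<Rightarrow> int" and a :: "nat \<Rightarrow> nat \<Rightarrow> int"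
  assumes "r > 0" and "q > 0" and "k \<ge> 1"
    and "\<forall>i\<in>{1..k}. p i \<ge> 1"
    and "\<forall>i\<in>{1..k}. \<forall>j\<in>{1..p i}. a i j > 0"
    and "formally_satisfies k p s a nu (\<lambda>n. \<lceil>real_of_int (r * n) / real_of_int q\<rceil>)"
    and "\<forall>i\<in>{1..k}. real_of_int r * real (p i) / real_of_int q \<le> 1"
  shows "(\<exists>s' a' nu' m. param_equiv r q k p (s, a, nu) (s', a', nu') \<and> m > 0 \<and>
            generates k p s' a' nu' (\<lambda>n. \<lceil>real_of_int (r * n) / real_of_int q\<rceil>) m)
       \<and> ((\<forall>i\<in>{1..k}. real_of_int r * real (p i) / real_of_int q < 1) \<longrightarrow>
            (\<exists>m>0. generates k p s a nu (\<lambda>n. \<lceil>real_of_int (r * n) / real_of_int q\<rceil>) m))"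
proof (intro conjI impI)
  note r = assms(1) and q = assms(2) and p = assms(4) and a = assms(5) and fs = assms(6)
    and pr = assms(7)
  define C where "C = (\<Sum>i=1..k. \<bar>s i\<bar> + int (p i) + 1)"
  have C: "C \<ge> \<bar>s i\<bar> + int (p i) + 1" if "i \<in> {1..k}" for i
    unfolding C_def using that by (intro member_le_sum) auto
  define st where "st t = (\<lambda>i. if 1 \<le> i \<and> i \<le> t then s i - C*q else s i)" for t :: nat
  have eqv: "t \<le> k \<Longrightarrow> param_equiv r q k p (s,a,nu) (st t, a, nu - int t*C*r)" for t
  proof (induction t)
    case 0
    have "st 0 = s" unfolding st_def by auto
    thus ?case unfolding param_equiv_def by simp
  next
    case (Suc t)
    have "param_move r q k p (st t, a, nu - int t*C*r) (st (Suc t), a, nu - int (Suc t)*C*r)"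
      unfolding param_move_def
    proof (simp only: prod.case, intro disjI2 bexI[of _ "Suc t"] exI[of _ "-C"])
      have "st (Suc t) = (st t)(Suc t := st t (Suc t) + - C * q)"
        unfolding st_def by (auto simp: fun_eq_iff)
      moreover have "nu - int (Suc t)*C*r = nu - int t*C*r + - C * r" by (simp add: algebra_simps)
      ultimately show "(st (Suc t), a, nu - int (Suc t)*C*r) =
          ((st t)(Suc t := st t (Suc t) + - C * q), a, nu - int t*C*r + - C * r)" by simp
      show "Suc t \<in> {1..k}" using Suc by simp
    qed
    hence e2: "param_equiv r q k p (st t, a, nu - int t*C*r) (st (Suc t), a, nu - int (Suc t)*C*r)"
      unfolding param_equiv_def by (rule r_into_equivclp)
    have "t \<le> k" using Suc.prems by simp
    hence e1: "param_equiv r q k p (s,a,nu) (st t, a, nu - int t*C*r)" by (rule Suc.IH)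
    show ?case using e1 e2 unfolding param_equiv_def by (rule equivclp_trans)
  qed
  have fs': "formally_satisfies k p (st k) a (nu - int k*C*r) (F r q)"
    unfolding formally_satisfies_def
  proof
    fix n
    have h1: "rhs k p (st k) a (nu - int k*C*r) (F r q) n = rhs k p s a nu (F r q) n"
    proof -
      have "(\<Sum>i=1..k. F r q (n - st k i - (\<Sum>j=1..p i. F r q (n - a i j))))
          = (\<Sum>i=1..k. F r q (n - s i - (\<Sum>j=1..p i. F r q (n - a i j))) + C*r)"
      proof (rule sum.cong)
        fix i assume "i \<in> {1..k}"
        hence "st k i = s i - C*q" unfolding st_def by auto
        hence h: "n - st k i - (\<Sum>j=1..p i. F r q (n - a i j)) =
           (n - s i - (\<Sum>j=1..p i. F r q (n - a i j))) + C*q" by simp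
        show "F r q (n - st k i - (\<Sum>j=1..p i. F r q (n - a i j))) =
           F r q (n - s i - (\<Sum>j=1..p i. F r q (n - a i j))) + C*r"
          by (simp only: h F_shift[OF q])
      qed simp
      moreover have "(\<Sum>i=1..k. F r q (n - s i - (\<Sum>j=1..p i. F r q (n - a i j))) + C*r)
         = (\<Sum>i=1..k. F r q (n - s i - (\<Sum>j=1..p i. F r q (n - a i j)))) + int k * (C*r)"
        by (simp only: sum.distrib sum_constant card_atLeastAtMost diff_Suc_1)
      ultimately have hS: "(\<Sum>i=1..k. F r q (n - st k i - (\<Sum>j=1..p i. F r q (n - a i j))))
          = (\<Sum>i=1..k. F r q (n - s i - (\<Sum>j=1..p i. F r q (n - a i j)))) + int k * (C*r)" by (rule trans)
      show ?thesis unfolding rhs_def hS by (rule cancel_aux)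
    qed
    have h2: "F r q n = rhs k p s a nu (F r q) n"
      using fs unfolding formally_satisfies_def by blast
    show "F r q n = rhs k p (st k) a (nu - int k*C*r) (F r q) n" by (rule trans[OF h2 sym[OF h1]])
  qed
  have "\<exists>m>0. generates k p (st k) a (nu - int k*C*r) (F r q) m"
  proof (rule G[OF r q p a fs'], intro ballI exI[of _ 0] allI impI)
    fix i n assume i: "i \<in> {1..k}" and n: "(0::int) < n"
    define S where "S = (\<Sum>j=1..p i. F r q (n - a i j))"
    have "q * S \<le> int (p i) * (r*n + q)" unfolding S_def using a i by (intro S_hi[OF r q]) blast
    moreover have "int (p i) * (r*n) \<le> q*n"
    proof -
      have "r * int (p i) * n \<le> q * n" using int_le[OF q, of r "p i"] pr i n
        by (intro mult_right_mono) auto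
      thus ?thesis by (simp add: ac_simps)
    qed
    moreover have "int (p i)*(r*n+q) = int (p i)*(r*n) + q*int (p i)" by (simp add: distrib_left mult.commute)
    moreover have "q*(n+int (p i)) = q*n + q*int (p i)" by (simp add: distrib_left)
    ultimately have "q*S \<le> q*(n + int (p i))" by linarith
    hence "S \<le> n + int (p i)" using q by simp
    moreover have "C*1 \<le> C*q" using C[OF i] q by (intro mult_left_mono) auto
    moreover have "st k i = s i - C*q" using i unfolding st_def by auto
    ultimately show "1 \<le> n - st k i - S" using C[OF i] by linarith
  qed
  thus "\<exists>s' a' nu' m. param_equiv r q k p (s, a, nu) (s', a', nu') \<and> m > 0 \<and>
            generates k p s' a' nu' (\<lambda>n. \<lceil>real_of_int (r * n) / real_of_int q\<rceil>) m"
    using eqv[of k] by blast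
next
  note r = assms(1) and q = assms(2) and p = assms(4) and a = assms(5) and fs = assms(6)
  assume lt: "\<forall>i\<in>{1..k}. real_of_int r * real (p i) / real_of_int q < 1"
  show "\<exists>m>0. generates k p s a nu (\<lambda>n. \<lceil>real_of_int (r * n) / real_of_int q\<rceil>) m"
  proof (rule G[OF r q p a fs], intro ballI)
    fix i assume i: "i \<in> {1..k}"
    show "\<exists>M. \<forall>n>M. 1 \<le> n - s i - (\<Sum>j=1..p i. F r q (n - a i j))"
    proof (intro exI[of _ "q*(1 + \<bar>s i\<bar> + int (p i))"] allI impI)
      fix n assume n: "q*(1 + \<bar>s i\<bar> + int (p i)) < n"
      define S where "S = (\<Sum>j=1..p i. F r q (n - a i j))"
      have "q*(1 + \<bar>s i\<bar> + int (p i)) \<ge> 0" using q by simp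
      hence n0: "n \<ge> 0" using n by linarith
      have "q * S \<le> int (p i) * (r*n + q)" unfolding S_def using a i by (intro S_hi[OF r q]) blast
      moreover have "int (p i) * (r*n) \<le> (q-1)*n"
      proof -
        have "r * int (p i) * n \<le> (q-1) * n" using int_lt[OF q, of r "p i"] lt i n0
          by (intro mult_right_mono) auto
        thus ?thesis by (simp add: ac_simps)
      qed
      moreover have "int (p i)*(r*n+q) = int (p i)*(r*n) + q*int (p i)" by (simp add: distrib_left mult.commute)
      ultimately have qS: "q*S \<le> (q-1)*n + q * int (p i)" by linarith
      have e1: "q*(n - s i - S) = q*n - q*s i - q*S" by (simp add: right_diff_distrib)
      have e2: "(q-1)*n = q*n - n" by (simp add: left_diff_distrib)
      have "q*(n - s i - S) \<ge> n - q * s i - q * int (p i)" using qS e1 e2 by (smt (verit))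
      moreover have "q * s i \<le> q * \<bar>s i\<bar>" using q by simp
      moreover have "q*(1 + \<bar>s i\<bar> + int (p i)) = q + q*\<bar>s i\<bar> + q*int (p i)" by (simp add: distrib_left)
      ultimately have "q*(n - s i - S) \<ge> q*1" using n by linarith
      hence "n - s i - S \<ge> 1" using q by (simp add: mult_le_cancel_left)
      thus "1 \<le> n - s i - S" .
    qed
  qed
qed

end
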